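(* In type $C_\infty$, let $b\ge1$ and $\nu=(\mu_1,\mu_2,\nu_1,\dots,\nu_b)\in I^{b+2}$. Then \[\psi_{b+1}\Psi[2,b]e(\nu)=\Psi[2,b]\psi_1e(\nu)+\sum_{k=1}^b\Psi_2(k,2,b-k)\,c_k\,\Psi[2,k-1]e(\nu),\] where $c_k=x_k+x_{k+2}$ if $(\mu_1,\mu_2,\nu_k)=(1,0,1)$, $c_k=1$ if $(\mu_1,\mu_2,\nu_k)=(i,i\pm1,i)$ for some $i$ with $\mu_2\ne0$, and $c_k=0$ otherwise.
   Context: Type $C_\infty$: $I=\mathbb Z_{\ge0}$. Quiver Hecke algebra with $Q_{ii}=0$, $Q_{ji}(u,v)=Q_{ij}(v,u)$, for $i<j$: $Q_{01}=u+v^2$, $Q_{i,i+1}=u+v$ ($i\ge1$), else $1$; standard relations $\psi_re(\nu)=e(s_r\nu)\psi_r$, $x_r\psi_re(\nu)=(\psi_rx_{r+1}-\delta_{\nu_r\nu_{r+1}})e(\nu)$, $x_{r+1}\psi_re(\nu)=(\psi_rx_r+\delta_{\nu_r\nu_{r+1}})e(\nu)$, $\psi_r^2e(\nu)=Q_{\nu_r\nu_{r+1}}(x_r,x_{r+1})e(\nu)$, distant commutation, and $(\psi_{r+1}\psi_r\psi_{r+1}-\psi_r\psi_{r+1}\psi_r)e(\nu)=\delta_{\nu_r\nu_{r+2}}\frac{Q_{\nu_r\nu_{r+1}}(x_r,x_{r+1})-Q_{\nu_r\nu_{r+1}}(x_{r+2},x_{r+1})}{x_r-x_{r+2}}e(\nu)$.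 For $a,b\ge0$, $w[a,b]\in\mathfrak S_n$ maps $x\mapsto x+b$ ($1\le x\le a$), $x\mapsto x-a$ ($a<x\le a+b$), and fixes $x>a+b$; it is fully commutative with reduced expression $(s_b\cdots s_1)(s_{b+1}\cdots s_2)\cdots(s_{a+b-1}\cdots s_a)$. For $c\ge0$, $S_2(c,a,b)$ is obtained from this reduced expression by replacing each $s_i$ with $s_{i+c}$; $\Psi_2(c,a,b)$ is the corresponding product of $\psi$'s (well defined), and $\Psi[a,b]=\Psi_2(0,a,b)$; in particular $\Psi[2,0]=1$. *)

theory Defs
  imports Main
begin

text \<open>Quiver Hecke algebra of type C-infinity, index set I = nat.
  Sequences nu in I^n are lists of length n; entry nu_r (1-based) is nu ! (r - 1).
  Generators: e nu (idempotents), x r (1 <= r <= n), psi r (1 <= r < n), in a ring 'a.\<close>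

text \<open>The action of the simple transposition s_r on a sequence (positions r, r+1, 1-based).\<close>
definition klr_swap :: "nat \<Rightarrow> nat list \<Rightarrow> nat list" where
  "klr_swap r nu = nu[r - 1 := nu ! r, r := nu ! (r - 1)]"

definition klr_Qlt :: "nat \<Rightarrow> nat \<Rightarrow> 'a::ring_1 \<Rightarrow> 'a \<Rightarrow> 'a" where
  "klr_Qlt i j u v =
     (if i = 0 \<and> j = 1 then u + v ^ 2 else if j = i + 1 then u + v else 1)"

definition klr_Q :: "nat \<Rightarrow> nat \<Rightarrow> 'a::ring_1 \<Rightarrow> 'a \<Rightarrow> 'a" where
  "klr_Q i j u v =
     (if i = j then 0 else if i < j then klr_Qlt i j u v else klr_Qlt j i v u)"

text \<open>The divided difference (Q_ij(u,v) - Q_ij(w,v)) / (u - w), as a polynomial in u, v, w,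
  written out explicitly (see the sanity lemma klr_dd_correct below).\<close>
definition klr_dd :: "nat \<Rightarrow> nat \<Rightarrow> 'a::ring_1 \<Rightarrow> 'a \<Rightarrow> 'a \<Rightarrow> 'a" where
  "klr_dd i j u v w =
     (if i = j then 0
      else if i < j then (if (i = 0 \<and> j = 1) \<or> j = i + 1 then 1 else 0)
      else (if j = 0 \<and> i = 1 then u + w else if i = j + 1 then 1 else 0))"

lemma klr_dd_correct:
  fixes u v w :: "'a::comm_ring_1"
  shows "(u - w) * klr_dd i j u v w = klr_Q i j u v - klr_Q i j w v"
  by (auto simp: klr_dd_def klr_Q_def klr_Qlt_def algebra_simps power2_eq_square)

definition is_klr_Cinf ::
  "nat \<Rightarrow> (nat list \<Rightarrow> 'a::ring_1) \<Rightarrow> (nat \<Rightarrow> 'a) \<Rightarrow> (nat \<Rightarrow> 'a) \<Rightarrow> bool" where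
  "is_klr_Cinf n e x psi \<longleftrightarrow>
    (\<forall>nu nu'. length nu = n \<longrightarrow> length nu' = n \<longrightarrow>
        e nu * e nu' = (if nu = nu' then e nu else 0)) \<and>
    (\<forall>nu r. length nu = n \<longrightarrow> 1 \<le> r \<longrightarrow> r \<le> n \<longrightarrow> x r * e nu = e nu * x r) \<and>
    (\<forall>r s. 1 \<le> r \<longrightarrow> r \<le> n \<longrightarrow> 1 \<le> s \<longrightarrow> s \<le> n \<longrightarrow> x r * x s = x s * x r) \<and>
    (\<forall>nu r. length nu = n \<longrightarrow> 1 \<le> r \<longrightarrow> r < n \<longrightarrow>
        psi r * e nu = e (klr_swap r nu) * psi r) \<and>
    (\<forall>nu r. length nu = n \<longrightarrow> 1 \<le> r \<longrightarrow> r < n \<longrightarrow>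
        x r * psi r * e nu
          = psi r * x (r + 1) * e nu - (if nu ! (r - 1) = nu ! r then e nu else 0)) \<and>
    (\<forall>nu r. length nu = n \<longrightarrow> 1 \<le> r \<longrightarrow> r < n \<longrightarrow>
        x (r + 1) * psi r * e nu
          = psi r * x r * e nu + (if nu ! (r - 1) = nu ! r then e nu else 0)) \<and>
    (\<forall>nu r. length nu = n \<longrightarrow> 1 \<le> r \<longrightarrow> r < n \<longrightarrow>
        psi r * psi r * e nu = klr_Q (nu ! (r - 1)) (nu ! r) (x r) (x (r + 1)) * e nu) \<and>
    (\<forall>r s. 1 \<le> r \<longrightarrow> r < n \<longrightarrow> 1 \<le> s \<longrightarrow> s \<le> n \<longrightarrow> s \<noteq> r \<longrightarrow> s \<noteq> r + 1 \<longrightarrow>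
        psi r * x s = x s * psi r) \<and>
    (\<forall>r s. 1 \<le> r \<longrightarrow> r < n \<longrightarrow> 1 \<le> s \<longrightarrow> s < n \<longrightarrow> (r + 1 < s \<or> s + 1 < r) \<longrightarrow>
        psi r * psi s = psi s * psi r) \<and>
    (\<forall>nu r. length nu = n \<longrightarrow> 1 \<le> r \<longrightarrow> r + 1 < n \<longrightarrow>
        (psi (r + 1) * psi r * psi (r + 1) - psi r * psi (r + 1) * psi r) * e nu
          = (if nu ! (r - 1) = nu ! (r + 1)
             then klr_dd (nu ! (r - 1)) (nu ! r) (x r) (x (r + 1)) (x (r + 2)) * e nu
             else 0))"

text \<open>Reduced word of S_2(c,a,b): (s_{b+c} ... s_{1+c})(s_{b+1+c} ... s_{2+c}) ... (s_{a+b-1+c} ... s_{a+c}).\<close>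
definition klr_word :: "nat \<Rightarrow> nat \<Rightarrow> nat \<Rightarrow> nat list" where
  "klr_word c a b = concat (map (\<lambda>j. rev [j + c..<j + c + b]) [1..<a + 1])"

definition Psi2 :: "(nat \<Rightarrow> 'a::monoid_mult) \<Rightarrow> nat \<Rightarrow> nat \<Rightarrow> nat \<Rightarrow> 'a" where
  "Psi2 psi c a b = prod_list (map psi (klr_word c a b))"

lemma "klr_word 0 2 3 = [3,2,1,4,3,2]" by (simp add: klr_word_def upt_rec)

end

theory Submission
  imports Defs
begin



lemma swap_len[simp]: "length (klr_swap r nu) = length nu"
  by (simp add: klr_swap_def)

lemma foldr_swap_len[simp]: "length (foldr klr_swap ws nu) = length nu"
  by (induction ws) auto

lemma swap_nth:
  assumes "1 \<le> r" "r < length l" "i < length l"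
  shows "klr_swap r l ! i = (if i = r - 1 then l ! r else if i = r then l ! (r - 1) else l ! i)"
  using assms by (auto simp: klr_swap_def nth_list_update)

lemma mv_nth:
  assumes "1 \<le> j" "j + m \<le> length nu"
  shows "i < length nu \<Longrightarrow> foldr klr_swap (rev [j..<j+m]) nu ! i =
     (if i < j - 1 then nu ! i else if i < j + m - 1 then nu ! (i+1)
      else if i = j + m - 1 then nu ! (j - 1) else nu ! i)"
  using assms
proof (induction m arbitrary: i)
  case 0
  then show ?case by auto
next
  case (Suc m)
  let ?L = "foldr klr_swap (rev [j..<j+m]) nu"
  have L1: "?L ! (j+m) = nu ! (j+m)" using Suc by auto
  have L2: "?L ! (j+m-1) = nu ! (j-1)" using Suc by auto
  have eq: "foldr klr_swap (rev [j..<j+Suc m]) nu = klr_swap (j+m) ?L" by simp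
  have IH: "?L ! i = (if i < j - 1 then nu ! i else if i < j + m - 1 then nu ! (i+1)
      else if i = j + m - 1 then nu ! (j - 1) else nu ! i)" using Suc by simp
  have ln: "length ?L = length nu" by simp
  consider "i = j + m - 1" | "i = j + m" | "i \<noteq> j + m - 1" "i \<noteq> j + m" by blast
  then show ?case
  proof cases
    case 1
    then show ?thesis unfolding eq using Suc.prems L1 ln
      by (auto simp add: swap_nth)
  next
    case 2
    then show ?thesis unfolding eq using Suc.prems L2 ln
      by (auto simp add: swap_nth)
  next
    case 3
    then show ?thesis unfolding eq using Suc.prems IH ln
      by (auto simp add: swap_nth)
  qed
qed

lemma concat_map_Nil[simp]: "concat (map (\<lambda>j. []) xs) = []"
  by (induct xs) auto

lemma Psi2_0: "Psi2 psi c a 0 = 1"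
  by (simp add: Psi2_def klr_word_def concat_map_Nil)

lemma word2: "klr_word c 2 b = rev [1+c..<1+c+b] @ rev [2+c..<2+c+b]"
  by (simp add: klr_word_def upt_rec add.commute)

lemma psi_comm_prod:
  assumes H: "is_klr_Cinf n e x psi" and r: "r < n"
    and ws: "\<forall>j\<in>set ws. 1 \<le> j \<and> j + 1 < r"
  shows "psi r * prod_list (map psi ws) = prod_list (map psi ws) * psi r"
  using ws
proof (induction ws)
  case Nil
  then show ?case by simp
next
  case (Cons a ws)
  have c: "psi r * psi a = psi a * psi r"
    using H Cons.prems r unfolding is_klr_Cinf_def by auto
  have "psi r * prod_list (map psi (a # ws)) = (psi r * psi a) * prod_list (map psi ws)"
    by (simp add: mult.assoc)
  also have "\<dots> = psi a * (psi r * prod_list (map psi ws))" by (simp add: c mult.assoc)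
  also have "\<dots> = psi a * (prod_list (map psi ws) * psi r)" using Cons by simp
  finally show ?case by (simp add: mult.assoc)
qed

lemma psi_transport:
  assumes H: "is_klr_Cinf n e x psi"
  shows "\<forall>j\<in>set ws. 1 \<le> j \<and> j < n \<Longrightarrow> length nu = n \<Longrightarrow>
    prod_list (map psi ws) * e nu = e (foldr klr_swap ws nu) * prod_list (map psi ws)"
proof (induction ws arbitrary: nu)
  case Nil
  then show ?case by simp
next
  case (Cons a ws)
  have IH: "prod_list (map psi ws) * e nu = e (foldr klr_swap ws nu) * prod_list (map psi ws)"
    using Cons by simp
  have c: "psi a * e (foldr klr_swap ws nu) = e (klr_swap a (foldr klr_swap ws nu)) * psi a"
    using H Cons.prems unfolding is_klr_Cinf_def by auto
  have "prod_list (map psi (a # ws)) * e nu = psi a * (prod_list (map psi ws) * e nu)"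
    by (simp add: mult.assoc)
  also have "\<dots> = (psi a * e (foldr klr_swap ws nu)) * prod_list (map psi ws)"
    by (simp add: IH mult.assoc)
  also have "\<dots> = e (foldr klr_swap (a # ws) nu) * prod_list (map psi (a # ws))"
    by (simp add: c mult.assoc)
  finally show ?case .
qed

lemma Psi2_decomp:
  assumes H: "is_klr_Cinf n e x psi" and mn: "m + c + 2 < n"
  shows "Psi2 psi c 2 (m + 1) = psi (m + c + 1) * psi (m + c + 2) * Psi2 psi c 2 m"
proof -
  have w1: "rev [1+c..<1+c+(m+1)] = (m+c+1) # rev [1+c..<1+c+m]" by simp
  have w2: "rev [2+c..<2+c+(m+1)] = (m+c+2) # rev [2+c..<2+c+m]" by simp
  let ?P1 = "prod_list (map psi (rev [1+c..<1+c+m]))"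
  let ?P2 = "prod_list (map psi (rev [2+c..<2+c+m]))"
  have cm: "psi (m+c+2) * ?P1 = ?P1 * psi (m+c+2)"
    by (rule psi_comm_prod[OF H]) (use mn in auto)
  have "Psi2 psi c 2 (m + 1) = psi (m+c+1) * (?P1 * psi (m+c+2)) * ?P2"
    unfolding Psi2_def word2 w1 w2 map_append prod_list.append list.map prod_list.Cons
    by (simp only: mult.assoc)
  also have "\<dots> = psi (m+c+1) * psi (m+c+2) * (?P1 * ?P2)"
    unfolding cm[symmetric] by (simp only: mult.assoc)
  also have "?P1 * ?P2 = Psi2 psi c 2 m"
    unfolding Psi2_def word2 map_append prod_list.append by (rule refl)
  finally show ?thesis .
qed

lemma act_vals:
  assumes "b + 2 < length nu"
  shows "foldr klr_swap (klr_word 0 2 b) nu ! b = nu ! 0"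
    "foldr klr_swap (klr_word 0 2 b) nu ! (b+1) = nu ! 1"
    "foldr klr_swap (klr_word 0 2 b) nu ! (b+2) = nu ! (b+2)"
proof -
  define N2 where "N2 = foldr klr_swap (rev [2..<2+b]) nu"
  have w: "klr_word 0 2 b = rev [1..<1+b] @ rev [2..<2+b]" using word2[of 0 b] by simp
  have f: "foldr klr_swap (klr_word 0 2 b) nu = foldr klr_swap (rev [1..<1+b]) N2"
    unfolding w N2_def by simp
  have l: "length N2 = length nu" unfolding N2_def by simp
  have m1: "\<And>i. i < length nu \<Longrightarrow> foldr klr_swap (rev [1..<1+b]) N2 ! i =
     (if i < 1 - 1 then N2 ! i else if i < 1 + b - 1 then N2 ! (i+1)
      else if i = 1 + b - 1 then N2 ! (1 - 1) else N2 ! i)"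
    using mv_nth[of 1 b N2] l assms by simp
  have m2: "\<And>i. i < length nu \<Longrightarrow> N2 ! i =
     (if i < 2 - 1 then nu ! i else if i < 2 + b - 1 then nu ! (i+1)
      else if i = 2 + b - 1 then nu ! (2 - 1) else nu ! i)"
    unfolding N2_def using mv_nth[of 2 b nu] assms by simp
  show "foldr klr_swap (klr_word 0 2 b) nu ! b = nu ! 0"
    unfolding f using m1[of b] m2[of 0] assms by (cases nu) auto
  show "foldr klr_swap (klr_word 0 2 b) nu ! (b+1) = nu ! 1"
    unfolding f using m1[of "b+1"] m2[of "b+1"] assms by simp
  show "foldr klr_swap (klr_word 0 2 b) nu ! (b+2) = nu ! (b+2)"
    unfolding f using m1[of "b+2"] m2[of "b+2"] assms by simp
qed

definition cc :: "(nat \<Rightarrow> 'a::ring_1) \<Rightarrow> nat list \<Rightarrow> nat \<Rightarrow> 'a" where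
  "cc x nu k = (if nu!0 = 1 \<and> nu!1 = 0 \<and> nu!(k+1) = 1 then x k + x (k+2)
     else if nu!1 \<noteq> 0 \<and> nu!(k+1) = nu!0 \<and> (nu!1 = nu!0+1 \<or> nu!0 = nu!1+1) then 1 else 0)"

lemma gen:
  fixes e :: "nat list \<Rightarrow> 'a::ring_1"
  assumes H: "is_klr_Cinf n e x psi" and len: "length nu = n"
  shows "b + 2 \<le> n \<Longrightarrow> psi (b+1) * Psi2 psi 0 2 b * e nu = Psi2 psi 0 2 b * psi 1 * e nu
     + (\<Sum>k\<in>{1..b}. Psi2 psi k 2 (b-k) * cc x nu k * Psi2 psi 0 2 (k-1) * e nu)"
proof (induction b)
  case 0
  then show ?case by (simp add: Psi2_0)
next
  case (Suc b)
  define P where "P = Psi2 psi 0 2 b"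
  define nu' where "nu' = foldr klr_swap (klr_word 0 2 b) nu"
  have bn: "b + 3 \<le> n" using Suc.prems by simp
  have IH: "psi (b+1) * P * e nu = P * psi 1 * e nu
     + (\<Sum>k\<in>{1..b}. Psi2 psi k 2 (b-k) * cc x nu k * Psi2 psi 0 2 (k-1) * e nu)"
    using Suc bn unfolding P_def by simp
  have tr: "P * e nu = e nu' * P" unfolding P_def Psi2_def nu'_def
    by (rule psi_transport[OF H]) (use bn len in \<open>auto simp: word2\<close>)
  have dec: "Psi2 psi 0 2 (Suc b) = psi (b+1) * psi (b+2) * P"
    using Psi2_decomp[OF H, of b 0] bn unfolding P_def by simp
  have braid: "\<And>mu r. length mu = n \<Longrightarrow> 1 \<le> r \<Longrightarrow> r + 1 < n \<Longrightarrow>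
        (psi (r + 1) * psi r * psi (r + 1) - psi r * psi (r + 1) * psi r) * e mu
          = (if mu ! (r - 1) = mu ! (r + 1)
             then klr_dd (mu ! (r - 1)) (mu ! r) (x r) (x (r + 1)) (x (r + 2)) * e mu
             else 0)"
    using H unfolding is_klr_Cinf_def by (elim conjE) blast
  have lnu': "length nu' = n" unfolding nu'_def using len by simp
  have av: "nu' ! b = nu ! 0" "nu' ! (b+1) = nu ! 1" "nu' ! (b+2) = nu ! (b+2)"
    unfolding nu'_def using act_vals[of b nu] len bn by auto
  define A where "A = psi (b+2) * psi (b+1) * psi (b+2)"
  define B where "B = psi (b+1) * psi (b+2) * psi (b+1)"
  define D where "D = (if nu' ! b = nu' ! (b+2)
             then klr_dd (nu' ! b) (nu' ! (b+1)) (x (b+1)) (x (b+2)) (x (b+3)) else 0)"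
  have br: "(A - B) * e nu' = D * e nu'"
    using braid[of nu' "b+1"] lnu' bn unfolding A_def B_def D_def
    by (simp add: numeral_eq_Suc)
  have br2: "A * e nu' = B * e nu' + D * e nu'"
    using br by (simp add: left_diff_distrib algebra_simps)
  have Dv: "D = cc x nu (b+1)"
    unfolding D_def cc_def av by (auto simp: klr_dd_def numeral_eq_Suc)
  have "psi (Suc b + 1) * Psi2 psi 0 2 (Suc b) * e nu = A * (P * e nu)"
    unfolding dec A_def by (simp add: mult.assoc)
  also have "\<dots> = (A * e nu') * P" by (simp add: tr mult.assoc)
  also have "\<dots> = B * (e nu' * P) + D * (e nu' * P)"
    by (simp add: br2 distrib_right mult.assoc)
  also have "\<dots> = psi (b+1) * psi (b+2) * (psi (b+1) * P * e nu) + cc x nu (b+1) * P * e nu"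
    by (simp add: tr[symmetric] B_def Dv mult.assoc)
  also have "\<dots> = (psi (b+1) * psi (b+2) * P) * psi 1 * e nu
     + (\<Sum>k\<in>{1..b}. (psi (b+1) * psi (b+2) * Psi2 psi k 2 (b-k)) * cc x nu k * Psi2 psi 0 2 (k-1) * e nu)
     + cc x nu (b+1) * P * e nu"
    unfolding IH by (simp add: distrib_left sum_distrib_left mult.assoc)
  also have "\<dots> = Psi2 psi 0 2 (Suc b) * psi 1 * e nu
     + (\<Sum>k\<in>{1..Suc b}. Psi2 psi k 2 (Suc b - k) * cc x nu k * Psi2 psi 0 2 (k-1) * e nu)"
  proof -
    have s: "(\<Sum>k\<in>{1..b}. (psi (b+1) * psi (b+2) * Psi2 psi k 2 (b-k)) * cc x nu k * Psi2 psi 0 2 (k-1) * e nu)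
       = (\<Sum>k\<in>{1..b}. Psi2 psi k 2 (Suc b - k) * cc x nu k * Psi2 psi 0 2 (k-1) * e nu)"
    proof (rule sum.cong[OF refl])
      fix k assume k: "k \<in> {1..b}"
      have "Psi2 psi k 2 (b - k + 1) = psi (b - k + k + 1) * psi (b - k + k + 2) * Psi2 psi k 2 (b-k)"
        by (rule Psi2_decomp[OF H]) (use k bn in auto)
      moreover have "Suc b - k = b - k + 1" "b - k + k = b" using k by auto
      ultimately show "(psi (b+1) * psi (b+2) * Psi2 psi k 2 (b-k)) * cc x nu k * Psi2 psi 0 2 (k-1) * e nu
         = Psi2 psi k 2 (Suc b - k) * cc x nu k * Psi2 psi 0 2 (k-1) * e nu" by simp
    qed
    show ?thesis unfolding s dec by (simp add: Psi2_0 P_def add.assoc)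
  qed
  finally show ?case by simp
qed


theorem mainTheorem14:
  fixes e :: "nat list \<Rightarrow> 'a::ring_1" and x psi :: "nat \<Rightarrow> 'a"
    and b mu1 mu2 :: nat and nus :: "nat list"
  assumes "is_klr_Cinf (b + 2) e x psi"
    and "1 \<le> b"
    and "length nus = b"
  shows "psi (b + 1) * Psi2 psi 0 2 b * e ([mu1, mu2] @ nus)
       = Psi2 psi 0 2 b * psi 1 * e ([mu1, mu2] @ nus)
         + (\<Sum>k\<in>{1..b}. Psi2 psi k 2 (b - k)
              * (if mu1 = 1 \<and> mu2 = 0 \<and> nus ! (k - 1) = 1 then x k + x (k + 2)
                 else if mu2 \<noteq> 0 \<and> nus ! (k - 1) = mu1 \<and> (mu2 = mu1 + 1 \<or> mu1 = mu2 + 1) then 1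
                 else 0)
              * Psi2 psi 0 2 (k - 1) * e ([mu1, mu2] @ nus))"
proof -
  let ?nu = "[mu1, mu2] @ nus"
  have "psi (b+1) * Psi2 psi 0 2 b * e ?nu = Psi2 psi 0 2 b * psi 1 * e ?nu
     + (\<Sum>k\<in>{1..b}. Psi2 psi k 2 (b-k) * cc x ?nu k * Psi2 psi 0 2 (k-1) * e ?nu)"
    by (rule gen[OF assms(1)]) (use assms in auto)
  moreover have "\<And>k. k \<in> {1..b} \<Longrightarrow> cc x ?nu k =
      (if mu1 = 1 \<and> mu2 = 0 \<and> nus ! (k - 1) = 1 then x k + x (k + 2)
                 else if mu2 \<noteq> 0 \<and> nus ! (k - 1) = mu1 \<and> (mu2 = mu1 + 1 \<or> mu1 = mu2 + 1) then 1
                 else 0)"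
  proof -
    fix k :: nat assume "k \<in> {1..b}"
    then have "?nu ! (k+1) = nus ! (k-1)" by (cases k) auto
    then show "?thesis k" unfolding cc_def by simp
  qed
  ultimately show ?thesis by simp
qed

end
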